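(* Let $x^0\in\{0,1\}^n$ be the input of the hypermutation operator and let $x^i$ be the $i$-th bitstring it samples. Let $S\subset\{1,\dots,n\}$ be an arbitrary set of indices, and for a bitstring $z$ let $z_S$ denote the subsequence of $z$ consisting of the positions in $S$. For any target string $s^*\in\{0,1\}^{|S|}$ and any integer $m>|S|$, the probability that $x^i_S=s^*$ for all $i\in\{m,\dots,n-m\}$ is at least $\left(\frac{m-|S|+1}{n-|S|+1}\right)^{|S|}$.
   Context: The hypermutation operator on input $x^0\in\{0,1\}^n$ (disregarding its stopping rule) flips the $n$ bit positions one at a time in a uniformly random order, i.e. according to a uniformly random permutation of $\{1,\dots,n\}$; the $i$-th sampled bitstring $x^i$ is the string obtained from $x^0$ after the first $i$ flips, $i=1,\dots,n$. *)

theory Defs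
  imports "HOL-Probability.Probability" "HOL-Combinatorics.Multiset_Permutations"
begin

text \<open>Bitstrings of length n are bool lists; positions are 0,...,n-1.
  The flip order of the hypermutation operator is a uniformly random
  permutation of the positions, given as a list sigma of distinct positions
  (an element of permutations_of_set {0..<n}).\<close>

definition hm_sample :: "bool list \<Rightarrow> nat list \<Rightarrow> nat \<Rightarrow> bool list" where
  "hm_sample x0 \<sigma> i =
     map (\<lambda>j. if j \<in> set (take i \<sigma>) then \<not> (x0 ! j) else x0 ! j) [0..<length x0]"

definition hm_flip_order :: "nat \<Rightarrow> nat list pmf" where
  "hm_flip_order n = pmf_of_set (permutations_of_set {0..<n})"

end

theory Submission imports Defs begin
lemma count_perm_lemma:
  assumes "finite (S::nat set)"
  shows "finite (U::nat set) \<Longrightarrow> S \<subseteq> U \<Longrightarrow> (\<forall>i\<in>S. m \<le> card (A i \<inter> U)) \<Longrightarrow>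
    (\<Prod>t<card S. (m - t)) * fact (card U - card S) \<le> card {q. q permutes U \<and> (\<forall>i\<in>S. q i \<in> A i)}"
  using assms
proof (induction S arbitrary: U A m rule: finite_induct)
  case empty
  then show ?case by (simp add: card_permutations)
next
  case (insert j S')
  define T where "T = {q. q permutes U \<and> (\<forall>i\<in>insert j S'. q i \<in> A i)}"
  define P where "P = A j \<inter> U"
  define B where "B p i = {x. Transposition.transpose j p x \<in> A i}" for p i
  define C where "C p = {q'. q' permutes (U - {j}) \<and> (\<forall>i\<in>S'. q' i \<in> B p i)}" for p
  define K where "K = (\<Prod>t<card S'. (m - 1 - t)) * fact (card (U-{j}) - card S')"
  have jU: "j \<in> U" using insert by auto
  have finU: "finite U" using insert by auto
  have KC: "K \<le> card (C p)" if pP: "p \<in> P" for p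
  proof -
    have pU: "p \<in> U" using pP P_def by auto
    have "m - 1 \<le> card (B p i \<inter> (U - {j}))" if iS: "i \<in> S'" for i
    proof -
      have eq: "B p i \<inter> U = Transposition.transpose j p ` (A i \<inter> U)"
      proof
        show "B p i \<inter> U \<subseteq> Transposition.transpose j p ` (A i \<inter> U)"
        proof
          fix x assume x: "x \<in> B p i \<inter> U"
          have "Transposition.transpose j p x \<in> U" using x permutes_in_image[OF permutes_swap_id[OF jU pU]] by auto
          then show "x \<in> Transposition.transpose j p ` (A i \<inter> U)" using x B_def
            by (intro image_eqI[of _ _ "Transposition.transpose j p x"]) auto
        qed
      next
        show "Transposition.transpose j p ` (A i \<inter> U) \<subseteq> B p i \<inter> U"
          using permutes_in_image[OF permutes_swap_id[OF jU pU]] by (auto simp: B_def)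
      qed
      have "card (B p i \<inter> U) = card (A i \<inter> U)"
        unfolding eq by (rule card_image) (meson inj_on_subset inj_transpose subset_UNIV)
      moreover have "m \<le> card (A i \<inter> U)" using insert iS by auto
      moreover have "card (B p i \<inter> (U - {j})) \<ge> card (B p i \<inter> U) - 1"
      proof -
        have "B p i \<inter> (U - {j}) = (B p i \<inter> U) - {j}" by auto
        then show ?thesis using finU by (simp add: card_Diff_singleton_if)
      qed
      ultimately show ?thesis by linarith
    qed
    then have "(\<Prod>t<card S'. (m - 1 - t)) * fact (card (U-{j}) - card S') \<le> card (C p)"
      unfolding C_def using insert finU by (intro insert.IH) auto
    then show ?thesis by (simp add: K_def)
  qed
  define F where "F p q' = Transposition.transpose j p \<circ> q'" for p and q' :: "nat \<Rightarrow> nat"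
  have sub: "(\<Union>p\<in>P. F p ` C p) \<subseteq> T"
  proof safe
    fix p q' assume pP: "p \<in> P" and q': "q' \<in> C p"
    have pU: "p \<in> U" using pP P_def by auto
    have qp: "q' permutes U" using q' C_def permutes_subset by fastforce
    have qj: "q' j = j" using q' C_def permutes_not_in by fastforce
    have "F p q' permutes U" unfolding F_def
      by (rule permutes_compose[OF qp permutes_swap_id[OF jU pU]])
    moreover have "F p q' j \<in> A j" using qj pP P_def F_def by simp
    moreover have "\<forall>i\<in>S'. F p q' i \<in> A i" using q' C_def B_def F_def by auto
    ultimately show "F p q' \<in> T" unfolding T_def by auto
  qed
  have finT: "finite T" unfolding T_def
    by (rule finite_subset[OF _ finite_permutations[OF finU]]) auto
  have finC: "finite (C p)" for p unfolding C_def
    by (rule finite_subset[OF _ finite_permutations[of "U - {j}"]]) (use finU in auto)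
  have injF: "inj_on (F p) (C p)" for p
  proof (rule inj_onI)
    fix x y assume "F p x = F p y"
    then have "Transposition.transpose j p \<circ> (Transposition.transpose j p \<circ> x) = Transposition.transpose j p \<circ> (Transposition.transpose j p \<circ> y)"
      unfolding F_def by simp
    then show "x = y" by (simp flip: comp_assoc)
  qed
  have "card (\<Union>p\<in>P. F p ` C p) = (\<Sum>p\<in>P. card (F p ` C p))"
  proof (rule card_UN_disjoint)
    show "finite P" using finU P_def by auto
    show "\<forall>i\<in>P. finite (F i ` C i)" using finC by auto
    show "\<forall>i\<in>P. \<forall>k\<in>P. i \<noteq> k \<longrightarrow> F i ` C i \<inter> F k ` C k = {}"
    proof (intro ballI impI)
      fix a b assume "a \<in> P" "b \<in> P" "a \<noteq> b"
      have Fj: "F p q j = p" if "q \<in> C p" for p q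
      proof -
        have "q j = j" using that C_def permutes_not_in by fastforce
        then show ?thesis by (simp add: F_def)
      qed
      show "F a ` C a \<inter> F b ` C b = {}"
      proof (rule equals0I)
        fix f assume "f \<in> F a ` C a \<inter> F b ` C b"
        then obtain x y where xy: "x \<in> C a" "f = F a x" "y \<in> C b" "f = F b y" by blast
        have "f j = a" using Fj[OF xy(1)] xy(2) by simp
        moreover have "f j = b" using Fj[OF xy(3)] xy(4) by simp
        ultimately have "a = b" by simp
        then show False using \<open>a \<noteq> b\<close> by simp
      qed
    qed
  qed
  also have "\<dots> = (\<Sum>p\<in>P. card (C p))" using injF by (simp add: card_image)
  also have "\<dots> \<ge> (\<Sum>p\<in>P. K)" using KC by (intro sum_mono) auto
  finally have "card P * K \<le> card T"
    using card_mono[OF finT sub] by simp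
  moreover have "m \<le> card P" using insert P_def by auto
  ultimately have "m * K \<le> card T" by (meson le_trans mult_le_mono1)
  moreover have "(\<Prod>t<card (insert j S'). (m - t)) * fact (card U - card (insert j S')) = m * K"
  proof -
    have "card (insert j S') = Suc (card S')" using insert by simp
    moreover have "card (U - {j}) = card U - 1" using jU finU by simp
    moreover have "(\<Prod>t<Suc (card S'). (m - t)) = m * (\<Prod>t<card S'. (m - 1 - t))"
      by (subst prod.lessThan_Suc_shift) (simp only: diff_Suc_eq_diff_pred diff_zero)
    moreover have "card U - Suc (card S') = card U - 1 - card S'" by simp
    ultimately show ?thesis unfolding K_def by (simp only: mult.assoc)
  qed
  ultimately show ?case unfolding T_def by simp
qed

lemma fact_prod_split: "k \<le> n \<Longrightarrow> (fact n :: nat) = fact (n - k) * (\<Prod>t<k. (n - t))"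
proof (induction k)
  case 0 then show ?case by simp
next
  case (Suc k)
  have e: "n - k = Suc (n - Suc k)" using Suc.prems by linarith
  have "(fact (n - k) :: nat) = (n - k) * fact (n - Suc k)"
    unfolding e by (simp only: fact_Suc of_nat_id)
  moreover have "fact n = (fact (n - k) :: nat) * (\<Prod>t<k. (n - t))"
    using Suc by simp
  moreover have "(\<Prod>t<Suc k. (n - t)) = (\<Prod>t<k. (n - t)) * (n - k)"
    by (simp only: prod.lessThan_Suc)
  ultimately show ?case by (simp only: mult_ac)
qed

lemma fac_ineq:
  assumes "t < k" "k < m" "m \<le> n"
  shows "(real m - real k + 1)/(real n - real k + 1) \<le> real (m - t)/real (n - t)"
proof -
  have h: "0 \<le> (real k - 1 - real t) * (real n - real m)" using assms by simp
  have "(real m - real k + 1) * (real n - real t) \<le> (real m - real t) * (real n - real k + 1)"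
    using h by (simp add: algebra_simps)
  moreover have "real (m - t) = real m - real t" "real (n - t) = real n - real t" using assms by auto
  moreover have "real n - real k + 1 > 0" "real n - real t > 0" using assms by auto
  ultimately show ?thesis by (simp add: divide_simps)
qed

theorem lemma3:
  fixes x0 :: "bool list" and S :: "nat set" and s :: "bool list" and m n :: nat
  assumes "length x0 = n"
    and "S \<subseteq> {0..<n}"
    and "length s = card S"
    and "m > card S"
    and "m \<le> n"
  shows "measure_pmf.prob (hm_flip_order n)
           {\<sigma>. \<forall>i\<in>{m..n-m}. nths (hm_sample x0 \<sigma> i) S = s}
         \<ge> ((real m - real (card S) + 1) / (real n - real (card S) + 1)) ^ card S"
proof -
  define k where "k = card S"
  define L where "L = nths [0..<n] S"
  define t where "t j = s ! (THE r. r < length L \<and> L ! r = j)" for j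
  define A where "A j = (if t j = x0 ! j then {n-m..<n} else {0..<m})" for j
  define Q where "Q = {q. q permutes {0..<n} \<and> (\<forall>j\<in>S. q j \<in> A j)}"
  define g where "g q = map (inv q) [0..<n]" for q :: "nat \<Rightarrow> nat"
  define P where "P = permutations_of_set {0..<n}"
  define E where "E = {\<sigma>. \<forall>i\<in>{m..n-m}. nths (hm_sample x0 \<sigma> i) S = s}"
  have finS: "finite S" using assms(2) finite_subset by blast
  have setL: "set L = S" using assms(2) unfolding L_def set_nths by (auto, force)
  have distL: "distinct L" unfolding L_def by simp
  have lenL: "length L = k"
  proof -
    have "{i. i < length [0..<n] \<and> i \<in> S} = S" using assms(2) by auto
    then show ?thesis unfolding L_def length_nths k_def by simp
  qed
  have nthsL: "nths l S = map (nth l) L" if "length l = n" for l :: "bool list"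
  proof -
    have "l = map (nth l) [0..<n]" using that map_nth by metis
    then have "nths l S = nths (map (nth l) [0..<n]) S" by simp
    then show ?thesis unfolding L_def nths_map .
  qed
  have cnt: "(\<Prod>t<k. (m - t)) * fact (n - k) \<le> card Q"
  proof -
    have "\<forall>i\<in>S. m \<le> card (A i \<inter> {0..<n})"
      using assms(5) by (auto simp: A_def)
    then show ?thesis using count_perm_lemma[of S "{0..<n}" m A] finS assms(2)
      unfolding Q_def k_def by simp
  qed
  have gQ: "g ` Q \<subseteq> P \<inter> E"
  proof
    fix \<sigma> assume "\<sigma> \<in> g ` Q"
    then obtain q where qQ: "q \<in> Q" and sig: "\<sigma> = g q" by blast
    have qp: "q permutes {0..<n}" using qQ Q_def by auto
    have iqp: "inv q permutes {0..<n}" using permutes_inv[OF qp] .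
    have "\<sigma> \<in> P"
    proof -
      have "set \<sigma> = {0..<n}" using sig g_def permutes_image[OF iqp] by simp
      moreover have "distinct \<sigma>" using sig g_def permutes_inj_on[OF iqp]
        by (simp add: distinct_map)
      ultimately show ?thesis unfolding P_def permutations_of_set_def by simp
    qed
    moreover have "\<sigma> \<in> E"
    proof -
      have "nths (hm_sample x0 \<sigma> i) S = s" if i: "i \<in> {m..n-m}" for i
      proof -
        have lenh: "length (hm_sample x0 \<sigma> i) = n" using assms(1) by (simp add: hm_sample_def)
        have "map (nth (hm_sample x0 \<sigma> i)) L = s"
        proof (rule nth_equalityI)
          show "length (map (nth (hm_sample x0 \<sigma> i)) L) = length s"
            using lenL assms(3) k_def by simp
        next
          fix r assume "r < length (map (nth (hm_sample x0 \<sigma> i)) L)"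
          then have r: "r < length L" by simp
          define j where "j = L ! r"
          have jS: "j \<in> S" using r setL j_def nth_mem by blast
          have jn: "j < n" using jS assms(2) by auto
          have "(THE r'. r' < length L \<and> L ! r' = j) = r"
            unfolding j_def using r distL by (intro the_equality) (auto simp: nth_eq_iff_index_eq)
          then have tj: "t j = s ! r" using t_def by simp
          have qjn: "q j < n" using permutes_in_image[OF qp] jn by simp
          have inset: "j \<in> set (take i \<sigma>) \<longleftrightarrow> q j < i"
          proof -
            have tk: "take i [0..<n] = [0..<min i n]"
            proof (cases "i \<le> n")
              case True then show ?thesis by (simp add: take_upt min_def)
            next
              case False then show ?thesis by (simp add: min_def)
            qed
            have "set (take i \<sigma>) = inv q ` {0..<min i n}"
              using sig g_def by (simp add: take_map tk)
            also have "j \<in> inv q ` {0..<min i n} \<longleftrightarrow> q j < min i n"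
            proof
              assume "j \<in> inv q ` {0..<min i n}"
              then obtain y where "y < min i n" "j = inv q y" by auto
              then show "q j < min i n" using permutes_inverses(1)[OF qp] by simp
            next
              assume "q j < min i n"
              then show "j \<in> inv q ` {0..<min i n}"
                using permutes_inverses(2)[OF qp] by (intro image_eqI[of _ _ "q j"]) auto
            qed
            finally show ?thesis using qjn by auto
          qed
          have hj: "hm_sample x0 \<sigma> i ! j = (if q j < i then \<not> x0 ! j else x0 ! j)"
            using jn assms(1) inset by (simp add: hm_sample_def)
          have qA: "q j \<in> A j" using qQ jS Q_def by auto
          have "hm_sample x0 \<sigma> i ! j = t j"
          proof (cases "t j = x0 ! j")
            case True
            then have "q j \<ge> n - m" using qA A_def by auto
            then show ?thesis using hj i True by auto
          next
            case False
            then have "q j < m" using qA A_def by auto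
            then show ?thesis using hj i False by auto
          qed
          then show "map (nth (hm_sample x0 \<sigma> i)) L ! r = s ! r"
            using r j_def tj by simp
        qed
        then show ?thesis using nthsL[OF lenh] by simp
      qed
      then show ?thesis unfolding E_def by simp
    qed
    ultimately show "\<sigma> \<in> P \<inter> E" by simp
  qed
  have injg: "inj_on g Q"
  proof (rule inj_onI)
    fix q1 q2 assume q1: "q1 \<in> Q" and q2: "q2 \<in> Q" and eq: "g q1 = g q2"
    have p1: "q1 permutes {0..<n}" and p2: "q2 permutes {0..<n}" using q1 q2 Q_def by auto
    have "inv q1 x = inv q2 x" for x
    proof (cases "x < n")
      case True
      then show ?thesis using eq unfolding g_def by (metis map_eq_conv atLeastLessThan_iff set_upt zero_le)
    next
      case False
      then show ?thesis using permutes_not_in[OF permutes_inv[OF p1]] permutes_not_in[OF permutes_inv[OF p2]]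
        by simp
    qed
    then have "inv q1 = inv q2" by auto
    then show "q1 = q2" using permutes_inv_inv[OF p1] permutes_inv_inv[OF p2] by metis
  qed
  have finP: "finite P" unfolding P_def by simp
  have cardle: "card Q \<le> card (P \<inter> E)"
    using card_inj_on_le[OF injg gQ] finP by simp
  have Pne: "P \<noteq> {}" unfolding P_def by (simp add: permutations_of_set_empty_iff)
  have cardP: "card P = fact n" unfolding P_def by simp
  have prob: "measure_pmf.prob (hm_flip_order n) E = real (card (P \<inter> E)) / fact n"
    unfolding hm_flip_order_def using measure_pmf_of_set[OF Pne finP, of E] cardP P_def by simp
  have kn: "k < m" "m \<le> n" using assms k_def by auto
  have fsplit: "(fact n :: real) = fact (n - k) * (\<Prod>t<k. real (n - t))"
  proof -
    have "(fact n :: nat) = fact (n - k) * (\<Prod>t<k. (n - t))"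
      using fact_prod_split[of k n] kn by linarith
    then have "real (fact n) = real (fact (n - k) * (\<Prod>t<k. (n - t)))" by (rule arg_cong)
    then show ?thesis by (simp only: of_nat_mult of_nat_prod of_nat_fact)
  qed
  have pos: "(\<Prod>t<k. real (n - t)) > 0" using kn by (intro prod_pos) auto
  define c where "c = (real m - real k + 1) / (real n - real k + 1)"
  have c0: "0 \<le> c" unfolding c_def using kn by (intro divide_nonneg_nonneg) auto
  have fp: "fact n > (0::real)" by simp
  have "c ^ k = (\<Prod>t<k. c)" by simp
  also have "\<dots> \<le> (\<Prod>t<k. real (m - t) / real (n - t))"
  proof (rule prod_mono)
    fix t assume "t \<in> {..<k}"
    then show "0 \<le> c \<and> c \<le> real (m - t) / real (n - t)"
      using fac_ineq[of t k m n] kn c0 unfolding c_def by auto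
  qed
  also have "\<dots> = (\<Prod>t<k. real (m - t)) / (\<Prod>t<k. real (n - t))"
    by (rule prod_dividef)
  also have "\<dots> = (\<Prod>t<k. real (m - t)) * fact (n - k) / fact n"
    unfolding fsplit using pos by simp
  also have "\<dots> = real ((\<Prod>t<k. (m - t)) * fact (n - k)) / fact n"
    by (simp only: of_nat_mult of_nat_prod of_nat_fact)
  also have "\<dots> \<le> real (card Q) / fact n"
  proof (rule divide_right_mono)
    show "real ((\<Prod>t<k. (m - t)) * fact (n - k)) \<le> real (card Q)"
      using cnt by (simp only: of_nat_le_iff)
  qed (rule less_imp_le[OF fp])
  also have "\<dots> \<le> real (card (P \<inter> E)) / fact n"
    using cardle fp by (intro divide_right_mono) simp_all
  finally have "c ^ k \<le> real (card (P \<inter> E)) / fact n" .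
  then show ?thesis using prob unfolding E_def k_def c_def by simp
qed

end
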